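(* Let $L/K$ be a quadratic extension of local fields and let $\lambda\subseteq\mathbb A=\mathbb M_2(K)$ be a subalgebra isomorphic to $L$, with ring of integers $\mathcal O_\lambda$ and a uniformizer $\boldsymbol\pi_\lambda$ of $\mathcal O_\lambda$. Let $\mathcal B$ be a full order of $\mathbb A$ containing $\mathcal O_\lambda$. Then every full order $\mathcal B'\subseteq\mathcal B$ with $\mathcal O_\lambda\subseteq\mathcal B'$ has the form $\mathcal B'=\mathcal O_\lambda+\boldsymbol\pi_\lambda^r\mathcal B$ for some integer $r\ge0$.
   Context: $K$ is a non-archimedean local field with ring of integers $\mathcal O_K$. An order of $\mathbb A$ is a subring containing the identity which is a finitely generated $\mathcal O_K$-submodule; full if it spans $\mathbb A$ over $K$. A uniformizer of $\mathcal O_\lambda$ is a generator of its maximal ideal. *)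

theory Defs
  imports "HOL-Analysis.Analysis"
begin

text \<open>A (normalised) discrete valuation on a field, given by v :: 'a => int;
  the value at 0 is irrelevant (conventionally +infinity) and is never used.\<close>
definition discrete_valuation :: "('a::field \<Rightarrow> int) \<Rightarrow> bool" where
  "discrete_valuation v \<longleftrightarrow>
     (\<forall>x y. x \<noteq> 0 \<longrightarrow> y \<noteq> 0 \<longrightarrow> v (x * y) = v x + v y) \<and>
     (\<forall>x y. x \<noteq> 0 \<longrightarrow> y \<noteq> 0 \<longrightarrow> x + y \<noteq> 0 \<longrightarrow> v (x + y) \<ge> min (v x) (v y)) \<and>
     (\<forall>n. \<exists>x. x \<noteq> 0 \<and> v x = n)"

definition vclose :: "('a::field \<Rightarrow> int) \<Rightarrow> int \<Rightarrow> 'a \<Rightarrow> 'a \<Rightarrow> bool" where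
  "vclose v n x y \<longleftrightarrow> x = y \<or> v (x - y) \<ge> n"

definition val_ring :: "('a::field \<Rightarrow> int) \<Rightarrow> 'a set" where
  "val_ring v = {x. x = 0 \<or> v x \<ge> 0}"

text \<open>Non-archimedean local field: complete w.r.t. a discrete valuation, with finite residue field.\<close>
definition nonarch_local_field :: "('a::field \<Rightarrow> int) \<Rightarrow> bool" where
  "nonarch_local_field v \<longleftrightarrow>
     discrete_valuation v \<and>
     (\<forall>s::nat \<Rightarrow> 'a. (\<forall>N. \<exists>M. \<forall>m\<ge>M. \<forall>n\<ge>M. vclose v N (s m) (s n)) \<longrightarrow>
         (\<exists>l. \<forall>N. \<exists>M. \<forall>n\<ge>M. vclose v N (s n) l)) \<and>
     finite ((\<lambda>x. {y \<in> val_ring v. vclose v 1 y x}) ` val_ring v)"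

type_synonym 'a mat2 = "'a ^ 2 ^ 2"

definition scal :: "'a::semiring_1 \<Rightarrow> 'a mat2 \<Rightarrow> 'a mat2" where
  "scal c M = (\<chi> i j. c * M $ i $ j)"

fun mpow :: "'a::semiring_1 mat2 \<Rightarrow> nat \<Rightarrow> 'a mat2" where
  "mpow M 0 = mat 1"
| "mpow M (Suc n) = M ** mpow M n"

definition lin_span :: "'a::field set \<Rightarrow> 'a mat2 set \<Rightarrow> 'a mat2 set" where
  "lin_span C S = {\<Sum>g\<in>G. scal (c g) g | G c. finite G \<and> G \<subseteq> S \<and> (\<forall>g\<in>G. c g \<in> C)}"

definition is_order :: "('a::field \<Rightarrow> int) \<Rightarrow> 'a mat2 set \<Rightarrow> bool" where
  "is_order v B \<longleftrightarrow>
     mat 1 \<in> B \<and> 0 \<in> B \<and>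
     (\<forall>x\<in>B. \<forall>y\<in>B. x + y \<in> B \<and> x ** y \<in> B) \<and>
     (\<forall>c\<in>val_ring v. \<forall>x\<in>B. scal c x \<in> B) \<and>
     (\<exists>G. finite G \<and> G \<subseteq> B \<and> B = lin_span (val_ring v) G)"

definition full_order :: "('a::field \<Rightarrow> int) \<Rightarrow> 'a mat2 set \<Rightarrow> bool" where
  "full_order v B \<longleftrightarrow> is_order v B \<and> lin_span UNIV B = UNIV"

text \<open>A K-subalgebra of M_2(K) which is a field, of dimension 2 over K (i.e. a quadratic
  extension L of K embedded in M_2(K)).\<close>
definition quadratic_subfield :: "'a::field mat2 set \<Rightarrow> bool" where
  "quadratic_subfield \<Lambda> \<longleftrightarrow>
     (\<exists>\<alpha>. \<alpha> \<notin> range (\<lambda>c. mat c) \<and> \<Lambda> = {mat a + scal b \<alpha> | a b. True}) \<and>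
     (\<forall>x\<in>\<Lambda>. \<forall>y\<in>\<Lambda>. x ** y \<in> \<Lambda>) \<and>
     (\<forall>x\<in>\<Lambda>. x \<noteq> 0 \<longrightarrow> (\<exists>y\<in>\<Lambda>. x ** y = mat 1))"

definition ring_of_integers :: "('a::field \<Rightarrow> int) \<Rightarrow> 'a mat2 set \<Rightarrow> 'a mat2 set" where
  "ring_of_integers v \<Lambda> = {x \<in> \<Lambda>. \<exists>n c. (\<forall>i<n. c i \<in> val_ring v) \<and>
       mpow x n + (\<Sum>i<n. scal (c i) (mpow x i)) = 0}"

definition is_ideal :: "'a::field mat2 set \<Rightarrow> 'a mat2 set \<Rightarrow> bool" where
  "is_ideal R I \<longleftrightarrow> I \<subseteq> R \<and> 0 \<in> I \<and> (\<forall>x\<in>I. \<forall>y\<in>I. x + y \<in> I \<and> - x \<in> I) \<and>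
       (\<forall>r\<in>R. \<forall>x\<in>I. r ** x \<in> I \<and> x ** r \<in> I)"

definition is_maximal_ideal :: "'a::field mat2 set \<Rightarrow> 'a mat2 set \<Rightarrow> bool" where
  "is_maximal_ideal R I \<longleftrightarrow> is_ideal R I \<and> I \<noteq> R \<and>
       (\<forall>J. is_ideal R J \<and> I \<subseteq> J \<longrightarrow> J = I \<or> J = R)"

definition uniformizer :: "'a::field mat2 set \<Rightarrow> 'a mat2 \<Rightarrow> bool" where
  "uniformizer R \<pi> \<longleftrightarrow> \<pi> \<in> R \<and> is_maximal_ideal R {\<pi> ** x | x. x \<in> R}"

end

theory Submission
  imports Defs
begin


definition ge :: "('a::field \<Rightarrow> int) \<Rightarrow> int \<Rightarrow> 'a \<Rightarrow> bool" where
  "ge v n x \<longleftrightarrow> x = 0 \<or> n \<le> v x"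

context fixes v :: "'a::field \<Rightarrow> int" assumes dv: "discrete_valuation v"
begin

lemma vmult: "x \<noteq> 0 \<Longrightarrow> y \<noteq> 0 \<Longrightarrow> v (x * y) = v x + v y"
  using dv unfolding discrete_valuation_def by blast

lemma vadd: "x \<noteq> 0 \<Longrightarrow> y \<noteq> 0 \<Longrightarrow> x + y \<noteq> 0 \<Longrightarrow> v (x + y) \<ge> min (v x) (v y)"
  using dv unfolding discrete_valuation_def by blast

lemma vsurj: "\<exists>x. x \<noteq> 0 \<and> v x = n"
  using dv unfolding discrete_valuation_def by blast

lemma v1: "v 1 = 0"
  using vmult[of 1 1] by simp

lemma vm1: "v (-1) = 0"
  using vmult[of "-1" "-1"] v1 by simp

lemma vneg: "v (- x) = v x"
proof (cases "x = 0")
  case True thus ?thesis by simp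
next
  case False
  then show ?thesis using vmult[of "-1" x] vm1 by simp
qed

lemma vinv: "x \<noteq> 0 \<Longrightarrow> v (inverse x) = - v x"
  using vmult[of x "inverse x"] v1 by simp

lemma vdiv: "x \<noteq> 0 \<Longrightarrow> y \<noteq> 0 \<Longrightarrow> v (x / y) = v x - v y"
  by (simp add: divide_inverse vmult vinv)

lemma vpow: "x \<noteq> 0 \<Longrightarrow> v (x ^ n) = int n * v x"
  by (induction n) (auto simp: vmult v1 algebra_simps)

lemma ge_add: "ge v n x \<Longrightarrow> ge v n y \<Longrightarrow> ge v n (x + y)"
  unfolding ge_def using vadd[of x y] by (cases "x=0"; cases "y=0"; cases "x+y=0"; auto)

lemma ge_neg: "ge v n (- x) \<longleftrightarrow> ge v n x"
  unfolding ge_def by (auto simp: vneg)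

lemma ge_diff: "ge v n x \<Longrightarrow> ge v n y \<Longrightarrow> ge v n (x - y)"
  using ge_add[of n x "-y"] ge_neg[of n y] by simp

lemma ge_mult: "ge v n x \<Longrightarrow> ge v m y \<Longrightarrow> ge v (n + m) (x * y)"
  unfolding ge_def by (cases "x=0"; cases "y=0"; auto simp: vmult)

lemma ge_mono: "ge v n x \<Longrightarrow> m \<le> n \<Longrightarrow> ge v m x"
  unfolding ge_def by auto

lemma ge_0 [simp]: "ge v n 0"
  unfolding ge_def by auto

lemma ge_1: "ge v 0 1"
  unfolding ge_def by (simp add: v1)

lemma ge_pow: "ge v n x \<Longrightarrow> ge v (int k * n) (x ^ k)"
proof (induction k)
  case 0 then show ?case using ge_1 by simp
next
  case (Suc k)
  then have "ge v (n + int k * n) (x * x ^ k)" using ge_mult by blast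
  then show ?case by (simp add: algebra_simps)
qed

lemma ge_sq: "ge v n (x * x) \<Longrightarrow> ge v (n div 2) x"
  unfolding ge_def by (cases "x=0"; auto simp: vmult; linarith)

lemma val_ring_ge: "val_ring v = {x. ge v 0 x}"
  unfolding val_ring_def ge_def by auto

end


lemma vclose_ge: "vclose v N x y \<longleftrightarrow> ge v N (x - y)"
  unfolding vclose_def ge_def by auto

lemma hensel:
  fixes v :: "'a::field \<Rightarrow> int"
  assumes nl: "nonarch_local_field v" and c: "ge v 1 c"
  shows "\<exists>y. y * y - y + c = 0"
proof -
  have dv: "discrete_valuation v" using nl unfolding nonarch_local_field_def by blast
  have compl: "\<And>s::nat \<Rightarrow> 'a. (\<forall>N. \<exists>M. \<forall>m\<ge>M. \<forall>n\<ge>M. vclose v N (s m) (s n)) \<Longrightarrow>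
         (\<exists>l. \<forall>N. \<exists>M. \<forall>n\<ge>M. vclose v N (s n) l)"
    using nl unfolding nonarch_local_field_def by blast
  define Y where "Y = rec_nat 0 (\<lambda>_ y. y * y + c)"
  have Y0: "Y 0 = 0" and YS: "\<And>n. Y (Suc n) = Y n * Y n + c" by (simp_all add: Y_def)
  have g1: "ge v 1 (Y n)" for n
  proof (induction n)
    case 0 then show ?case by (simp add: Y0 ge_def)
  next
    case (Suc n)
    have "ge v (1+1) (Y n * Y n)" using ge_mult[OF dv Suc Suc] .
    then have "ge v 1 (Y n * Y n)" using ge_mono[OF dv] by fastforce
    then show ?case unfolding YS using ge_add[OF dv _ c] by blast
  qed
  have g2: "ge v (int n + 1) (Y (Suc n) - Y n)" for n
  proof (induction n)
    case 0 then show ?case using c by (simp add: Y0 YS)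
  next
    case (Suc n)
    have eq: "Y (Suc (Suc n)) - Y (Suc n) = (Y (Suc n) - Y n) * (Y (Suc n) + Y n)"
      by (simp add: YS algebra_simps)
    have "ge v 1 (Y (Suc n) + Y n)" using ge_add[OF dv g1 g1] .
    from ge_mult[OF dv Suc this] show ?case unfolding eq by simp
  qed
  have g3: "m \<ge> n \<Longrightarrow> ge v (int n + 1) (Y m - Y n)" for m n
  proof (induction m rule: dec_induct)
    case base then show ?case by (simp add: ge_def)
  next
    case (step m)
    have "ge v (int n + 1) (Y (Suc m) - Y m)"
      using g2[of m] ge_mono[OF dv] step(1) by fastforce
    from ge_add[OF dv this step(3)] show ?case by simp
  qed
  have "\<forall>N. \<exists>M. \<forall>m\<ge>M. \<forall>n\<ge>M. vclose v N (Y m) (Y n)"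
  proof
    fix N
    show "\<exists>M. \<forall>m\<ge>M. \<forall>n\<ge>M. vclose v N (Y m) (Y n)"
    proof (intro exI allI impI)
      fix m n assume "nat N \<le> m" "nat N \<le> n"
      have "ge v (int (nat N) + 1) (Y m - Y (nat N) - (Y n - Y (nat N)))"
        using ge_diff[OF dv g3 g3] \<open>nat N \<le> m\<close> \<open>nat N \<le> n\<close> by blast
      then have "ge v N (Y m - Y n)" using ge_mono[OF dv] by fastforce
      then show "vclose v N (Y m) (Y n)" by (simp add: vclose_ge)
    qed
  qed
  from compl[OF this] obtain l where l: "\<And>N. \<exists>M. \<forall>n\<ge>M. vclose v N (Y n) l" by blast
  have gl: "ge v 1 l"
  proof -
    obtain M where "\<forall>n\<ge>M. vclose v 1 (Y n) l" using l by blast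
    then have "ge v 1 (Y M - l)" by (simp add: vclose_ge)
    from ge_diff[OF dv g1[of M] this] show ?thesis by simp
  qed
  show ?thesis
  proof (rule exI, rule ccontr)
    assume ne: "l * l - l + c \<noteq> 0"
    define E where "E = v (l * l - l + c)"
    obtain M where M: "\<forall>n\<ge>M. vclose v (E+1) (Y n) l" using l by blast
    have a: "ge v (E+1) (l - Y M)" using M ge_neg[OF dv, of _ "Y M - l"] by (simp add: vclose_ge)
    have b: "ge v (E+1) (l - Y (Suc M))" using M ge_neg[OF dv, of _ "Y (Suc M) - l"] by (simp add: vclose_ge)
    have "ge v 1 (l + Y M)" using ge_add[OF dv gl g1] .
    from ge_mult[OF dv a this] have "ge v (E+1) ((l - Y M) * (l + Y M))" using ge_mono[OF dv] by fastforce
    from ge_diff[OF dv this b] have "ge v (E+1) (l * l - l + c)"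
      by (simp add: YS algebra_simps)
    with ne show False unfolding ge_def E_def by simp
  qed
qed


definition det2 :: "'a::comm_ring_1 mat2 \<Rightarrow> 'a" where
  "det2 A = A$1$1 * A$2$2 - A$1$2 * A$2$1"
definition tr2 :: "'a::comm_ring_1 mat2 \<Rightarrow> 'a" where
  "tr2 A = A$1$1 + A$2$2"

lemma mat2_eq_iff: "(A::'a mat2) = B \<longleftrightarrow> A$1$1 = B$1$1 \<and> A$1$2 = B$1$2 \<and> A$2$1 = B$2$1 \<and> A$2$2 = B$2$2"
  by (auto simp: vec_eq_iff forall_2)


lemma m_entries [simp]:
  "((A::'a::semiring_1 mat2) ** B)$i$j = A$i$1 * B$1$j + A$i$2 * B$2$j"
  "(mat a :: 'a::semiring_1 mat2)$1$1 = a" "(mat a :: 'a mat2)$2$2 = a"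
  "(mat a :: 'a mat2)$1$2 = 0" "(mat a :: 'a mat2)$2$1 = 0"
  "(scal c M)$i$j = c * M$i$j"
  by (simp_all add: matrix_matrix_mult_def sum_2 mat_def scal_def)

lemma det2_mult: "det2 (A ** B) = det2 A * det2 (B::'a::comm_ring_1 mat2)"
  by (simp add: det2_def algebra_simps)

lemma det2_mat [simp]: "det2 (mat a :: 'a::comm_ring_1 mat2) = a * a"
  by (simp add: det2_def)
lemma tr2_mat [simp]: "tr2 (mat a :: 'a::comm_ring_1 mat2) = a + a"
  by (simp add: tr2_def)
lemma det2_add: "det2 (A + B) = det2 A + det2 B + tr2 A * tr2 B - tr2 (A ** (B::'a::comm_ring_1 mat2))"
  by (simp add: det2_def tr2_def algebra_simps)
lemma tr2_add: "tr2 (A + B) = tr2 A + tr2 (B::'a::comm_ring_1 mat2)"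
  by (simp add: tr2_def algebra_simps)
lemma det2_scal: "det2 (scal c A) = c * c * det2 (A::'a::comm_ring_1 mat2)"
  by (simp add: det2_def algebra_simps)
lemma tr2_scal: "tr2 (scal c A) = c * tr2 (A::'a::comm_ring_1 mat2)"
  by (simp add: tr2_def algebra_simps)
lemma det2_neg: "det2 (- A) = det2 (A::'a::comm_ring_1 mat2)"
  by (simp add: det2_def)
lemma tr2_neg: "tr2 (- A) = - tr2 (A::'a::comm_ring_1 mat2)"
  by (simp add: tr2_def)
lemma det2_0 [simp]: "det2 (0::'a::comm_ring_1 mat2) = 0"
  by (simp add: det2_def)
lemma det2_1plus: "det2 (mat 1 + A) = 1 + det2 A + tr2 (A::'a::comm_ring_1 mat2)"
  by (simp add: det2_def tr2_def algebra_simps)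
lemma cayley: "A ** A = scal (tr2 A) A - mat (det2 (A::'a::comm_ring_1 mat2))"
  unfolding mat2_eq_iff by (simp add: det2_def tr2_def algebra_simps)
lemma scal_mat: "scal c A = mat c ** (A::'a::comm_ring_1 mat2)"
  unfolding mat2_eq_iff by (simp add: det2_def tr2_def)
lemma scal_mat_r: "scal c A = A ** mat (c::'a::comm_ring_1)"
  unfolding mat2_eq_iff by (simp add: det2_def tr2_def algebra_simps)
lemma mat_add: "mat (a + b) = (mat a + mat b :: 'a::comm_ring_1 mat2)"
  unfolding mat2_eq_iff by (simp add: det2_def tr2_def)
lemma mat_mult: "mat (a * b) = (mat a ** mat b :: 'a::comm_ring_1 mat2)"
  unfolding mat2_eq_iff by (simp add: det2_def tr2_def)
lemma scal_add: "scal (a + b) A = scal a A + scal b (A::'a::comm_ring_1 mat2)"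
  unfolding mat2_eq_iff by (simp add: det2_def tr2_def algebra_simps)
lemma scal_add2: "scal a (A + B) = scal a A + scal a (B::'a::comm_ring_1 mat2)"
  unfolding mat2_eq_iff by (simp add: det2_def tr2_def algebra_simps)
lemma scal_scal: "scal a (scal b A) = scal (a * b) (A::'a::comm_ring_1 mat2)"
  unfolding mat2_eq_iff by (simp add: det2_def tr2_def algebra_simps)
lemma scal_mult_l: "scal a A ** B = scal a (A ** (B::'a::comm_ring_1 mat2))"
  unfolding mat2_eq_iff by (simp add: det2_def tr2_def algebra_simps)
lemma scal_mult_r: "A ** scal a B = scal a (A ** (B::'a::comm_ring_1 mat2))"
  unfolding mat2_eq_iff by (simp add: det2_def tr2_def algebra_simps)
lemma scal_1 [simp]: "scal 1 A = (A::'a::comm_ring_1 mat2)"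
  unfolding mat2_eq_iff by (simp add: det2_def tr2_def)
lemma scal_0 [simp]: "scal 0 A = (0::'a::comm_ring_1 mat2)"
  unfolding mat2_eq_iff by (simp add: det2_def tr2_def)
lemma scal_neg: "scal (-1) A = - (A::'a::comm_ring_1 mat2)"
  unfolding mat2_eq_iff by (simp add: det2_def tr2_def)
lemma mat_1_ne_0: "mat 1 \<noteq> (0 :: 'a::comm_ring_1 mat2)"
  unfolding mat2_eq_iff by (simp add: det2_def tr2_def)
lemma mult_0_l [simp]: "0 ** (A::'a::comm_ring_1 mat2) = 0" unfolding mat2_eq_iff by (simp add: det2_def tr2_def)
lemma mult_0_r [simp]: "(A::'a::comm_ring_1 mat2) ** 0 = 0" unfolding mat2_eq_iff by (simp add: det2_def tr2_def)
lemma mult_minus_l: "(- (A::'a::comm_ring_1 mat2)) ** (B::'a::comm_ring_1 mat2) = - (A ** B)" by (subst mat2_eq_iff, simp add: algebra_simps)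
lemma mult_minus_r: "(A::'a::comm_ring_1 mat2) ** (- B::'a::comm_ring_1 mat2) = - (A ** B)" by (subst mat2_eq_iff, simp add: algebra_simps)
lemma mult_diff_l: "((A::'a::comm_ring_1 mat2) - C) ** (B::'a::comm_ring_1 mat2) = A ** B - C ** B" by (subst mat2_eq_iff, simp add: algebra_simps algebra_simps)
lemma mult_diff_r: "(B::'a::comm_ring_1 mat2) ** (A - C) = B ** A - B ** (C::'a::comm_ring_1 mat2)" by (subst mat2_eq_iff, simp add: algebra_simps algebra_simps)

lemma lam_prod: "(mat a + scal b \<alpha>) ** (mat c + scal d \<alpha>) =
   mat (a*c) + scal (a*d + b*c) \<alpha> + scal (b*d) (\<alpha> ** (\<alpha>::'a::comm_ring_1 mat2))"
  unfolding mat2_eq_iff by (simp add: det2_def tr2_def algebra_simps)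

lemma noncomm: "\<exists>A B. A ** B \<noteq> B ** (A::'a::comm_ring_1 mat2)"
proof -
  define A :: "'a mat2" where "A = (\<chi> i j. if i = 1 \<and> j = 2 then 1 else 0)"
  define B :: "'a mat2" where "B = (\<chi> i j. if i = 2 \<and> j = 1 then 1 else 0)"
  have "(A ** B)$1$1 = 1" "(B ** A)$1$1 = 0" by (simp_all add: A_def B_def)
  then show ?thesis by (metis zero_neq_one)
qed

lemma mpow_det: "det2 (mpow A n) = det2 A ^ n"
  by (induction n) (simp_all add: det2_mult)


locale QF =
  fixes v :: "'a::field \<Rightarrow> int" and \<Lambda> :: "'a mat2 set" and \<alpha> :: "'a mat2"
  assumes nl: "nonarch_local_field v"
  and ans: "\<alpha> \<notin> range (\<lambda>c. mat c)"
  and Ldef: "\<Lambda> = {mat a + scal b \<alpha> | a b. True}"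
  and Lmul: "\<forall>x\<in>\<Lambda>. \<forall>y\<in>\<Lambda>. x ** y \<in> \<Lambda>"
  and Linv: "\<forall>x\<in>\<Lambda>. x \<noteq> 0 \<longrightarrow> (\<exists>y\<in>\<Lambda>. x ** y = mat 1)"
begin

lemma dv: "discrete_valuation v" using nl unfolding nonarch_local_field_def by blast

lemma Lmem [simp]: "mat a + scal b \<alpha> \<in> \<Lambda>"
  unfolding Ldef by blast
lemma Lcases: "x \<in> \<Lambda> \<Longrightarrow> (\<And>a b. x = mat a + scal b \<alpha> \<Longrightarrow> P) \<Longrightarrow> P"
  unfolding Ldef by blast
lemma L_mat [simp]: "mat a \<in> \<Lambda>"
  using Lmem[of a 0] by simp
lemma mat0: "mat 0 = (0::'a mat2)" by (subst mat2_eq_iff) simp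
lemma L_0 [simp]: "0 \<in> \<Lambda>" using L_mat[of 0] by (simp add: mat0)
lemma L_alpha [simp]: "\<alpha> \<in> \<Lambda>"
  using Lmem[of 0 1] by (simp add: mat0)
lemma L_add: "x \<in> \<Lambda> \<Longrightarrow> y \<in> \<Lambda> \<Longrightarrow> x + y \<in> \<Lambda>"
proof -
  assume "x \<in> \<Lambda>" "y \<in> \<Lambda>"
  then obtain a b c d where "x = mat a + scal b \<alpha>" "y = mat c + scal d \<alpha>" by (metis Lcases)
  then have "x + y = mat (a+c) + scal (b+d) \<alpha>" by (subst mat2_eq_iff) (simp add: algebra_simps)
  then show ?thesis by simp
qed
lemma L_scal: "x \<in> \<Lambda> \<Longrightarrow> scal c x \<in> \<Lambda>"
proof -
  assume "x \<in> \<Lambda>"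
  then obtain a b where "x = mat a + scal b \<alpha>" by (metis Lcases)
  then have "scal c x = mat (c*a) + scal (c*b) \<alpha>" by (subst mat2_eq_iff) (simp add: algebra_simps)
  then show ?thesis by simp
qed
lemma L_neg: "x \<in> \<Lambda> \<Longrightarrow> - x \<in> \<Lambda>"
  using L_scal[of x "-1"] by (simp add: scal_neg)
lemma L_diff: "x \<in> \<Lambda> \<Longrightarrow> y \<in> \<Lambda> \<Longrightarrow> x - y \<in> \<Lambda>"
  using L_add[of x "-y"] L_neg[of y] by simp
lemma L_mult: "x \<in> \<Lambda> \<Longrightarrow> y \<in> \<Lambda> \<Longrightarrow> x ** y \<in> \<Lambda>"
  using Lmul by blast
lemma L_comm: "x \<in> \<Lambda> \<Longrightarrow> y \<in> \<Lambda> \<Longrightarrow> x ** y = y ** x"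
proof -
  assume "x \<in> \<Lambda>" "y \<in> \<Lambda>"
  then obtain a b c d where "x = mat a + scal b \<alpha>" "y = mat c + scal d \<alpha>" by (metis Lcases)
  then show ?thesis by (simp only: lam_prod) (simp add: algebra_simps)
qed
lemma L_mpow: "x \<in> \<Lambda> \<Longrightarrow> mpow x n \<in> \<Lambda>"
  by (induction n) (auto simp: L_mult)
lemma L_inv: "x \<in> \<Lambda> \<Longrightarrow> x \<noteq> 0 \<Longrightarrow> \<exists>y\<in>\<Lambda>. x ** y = mat 1 \<and> y ** x = mat 1"
  using Linv L_comm by metis
lemma L_nozd: "x \<in> \<Lambda> \<Longrightarrow> y \<in> \<Lambda> \<Longrightarrow> x ** y = 0 \<Longrightarrow> x = 0 \<or> y = 0"
proof (rule ccontr)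
  assume a: "x \<in> \<Lambda>" "y \<in> \<Lambda>" "x ** y = 0" "\<not> (x = 0 \<or> y = 0)"
  then obtain z where "z \<in> \<Lambda>" "z ** x = mat 1" using L_inv by blast
  then have "y = z ** (x ** y)" by (simp add: matrix_mul_assoc)
  with a show False by simp
qed
lemma L_det_nz: "x \<in> \<Lambda> \<Longrightarrow> det2 x = 0 \<longleftrightarrow> x = 0"
proof
  assume "x \<in> \<Lambda>" "det2 x = 0"
  show "x = 0"
  proof (rule ccontr)
    assume "x \<noteq> 0"
    then obtain y where "x ** y = mat 1" using L_inv \<open>x \<in> \<Lambda>\<close> by blast
    then have "det2 x * det2 y = 1" using det2_mult[of x y] by simp
    with \<open>det2 x = 0\<close> show False by simp
  qed
qed simp

lemma v_two: "ge v 0 (1 + 1 :: 'a)"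
  using ge_add[OF dv ge_1[OF dv] ge_1[OF dv]] .

lemma quad_identity: "(x - mat y) ** (x - mat (t - y)) = x ** x - scal t x + mat (y * (t - y))"
  for x :: "'a mat2"
  by (subst mat2_eq_iff) (simp add: algebra_simps)

lemma H:
  assumes x: "x \<in> \<Lambda>" and t: "tr2 x \<noteq> 0" and d: "v (det2 x) \<ge> 2 * v (tr2 x) + 1"
  shows False
proof -
  define tt where "tt = tr2 x"
  define dd where "dd = det2 x"
  have xnz: "x \<noteq> 0" using t by (auto simp: tr2_def)
  have ddnz: "dd \<noteq> 0" using L_det_nz[OF x] xnz dd_def by simp
  have ttnz: "tt \<noteq> 0" using t tt_def by simp
  define c where "c = dd / (tt * tt)"
  have "v c = v dd - 2 * v tt" unfolding c_def
    using vdiv[OF dv ddnz, of "tt*tt"] vmult[OF dv ttnz ttnz] ttnz by simp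
  then have "ge v 1 c" unfolding ge_def using d tt_def dd_def by simp
  from hensel[OF nl this] obtain Y where Y: "Y * Y - Y + c = 0" by blast
  define y where "y = tt * Y"
  have "y * (tt - y) = dd"
  proof -
    have "y * (tt - y) = tt * tt * (Y - Y * Y)" by (simp add: y_def algebra_simps)
    also have "Y - Y * Y = c" using Y by (simp add: algebra_simps)
    finally show ?thesis using ttnz by (simp add: c_def)
  qed
  then have "(x - mat y) ** (x - mat (tt - y)) = 0"
    using quad_identity cayley[of x] tt_def dd_def by simp
  then have "x - mat y = 0 \<or> x - mat (tt - y) = 0"
    using L_nozd L_diff x L_mat by blast
  then obtain s where xs: "x = mat s" by auto
  have snz: "s \<noteq> 0" using xnz xs by (auto simp: mat_def vec_eq_iff)
  have ssnz: "s + s \<noteq> 0" using t xs by simp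
  have ss: "s + s = s * 2" by simp
  have two: "(2::'a) \<noteq> 0" using ssnz ss by auto
  have "ge v 0 (2::'a)" using v_two by (simp add: one_add_one)
  then have "v (2::'a) \<ge> 0" using two unfolding ge_def by simp
  then have "v (s + s) \<ge> v s" unfolding ss using vmult[OF dv snz two] by simp
  moreover have "v (det2 x) = 2 * v s" using xs vmult[OF dv snz snz] by simp
  ultimately show False using d xs by simp
qed

lemma H0: "x \<in> \<Lambda> \<Longrightarrow> ge v 0 (det2 x) \<Longrightarrow> ge v 0 (tr2 x)"
  using H[of x] L_det_nz[of x] unfolding ge_def by (fastforce simp: tr2_def)

lemma H1: "x \<in> \<Lambda> \<Longrightarrow> ge v 1 (det2 x) \<Longrightarrow> ge v 1 (tr2 x)"
  using H[of x] L_det_nz[of x] unfolding ge_def by (fastforce simp: tr2_def)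

end


lemma ge_zero [simp]: "ge v n 0" by (simp add: ge_def)

context QF begin

definition Rr where "Rr = {x \<in> \<Lambda>. ge v 0 (det2 x)}"

lemma UM_aux:
  assumes a: "a \<in> \<Lambda>" and w: "w \<in> \<Lambda>" and ga: "ge v m (det2 a)" and gw: "ge v 0 (det2 w)"
  shows "ge v m (det2 (a + a ** w))"
proof -
  have eq: "a + a ** w = a ** (mat 1 + w)" by (simp add: matrix_add_ldistrib)
  have "det2 (mat 1 + w) = 1 + det2 w + tr2 w" by (rule det2_1plus)
  moreover have "ge v 0 (1 + det2 w + tr2 w)"
    using ge_add[OF dv ge_add[OF dv ge_1[OF dv] gw] H0[OF w gw]] .
  ultimately have "ge v 0 (det2 (mat 1 + w))" by simp
  from ge_mult[OF dv ga this] show ?thesis unfolding eq det2_mult by simp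
qed

lemma UM:
  assumes x: "x \<in> \<Lambda>" and y: "y \<in> \<Lambda>" and gx: "ge v m (det2 x)" and gy: "ge v m (det2 y)"
  shows "ge v m (det2 (x + y))"
proof (cases "x = 0")
  case True then show ?thesis using gy by simp
next
  case False
  then obtain xi where xi: "xi \<in> \<Lambda>" "x ** xi = mat 1" "xi ** x = mat 1" using L_inv x by blast
  define z where "z = xi ** y"
  have z: "z \<in> \<Lambda>" using L_mult xi y z_def by simp
  have xz: "x ** z = y" unfolding z_def by (simp add: matrix_mul_assoc xi)
  show ?thesis
  proof (cases "ge v 0 (det2 z)")
    case True
    from UM_aux[OF x z gx True] show ?thesis by (simp add: xz)
  next
    case False
    then have znz: "z \<noteq> 0" and vz: "v (det2 z) < 0" unfolding ge_def by auto
    then obtain zi where zi: "zi \<in> \<Lambda>" "z ** zi = mat 1" using L_inv z by blast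
    have yzi: "y ** zi = x" by (metis xz matrix_mul_assoc zi(2) matrix_mul_rid)
    have dz: "det2 z * det2 zi = 1" using det2_mult[of z zi] zi by simp
    then have dznz: "det2 z \<noteq> 0" "det2 zi \<noteq> 0" by auto
    have "v (det2 z) + v (det2 zi) = 0" using vmult[OF dv dznz] dz v1[OF dv] by simp
    then have "ge v 0 (det2 zi)" using vz unfolding ge_def by simp
    from UM_aux[OF y zi(1) gy this] show ?thesis by (simp add: yzi add.commute)
  qed
qed

lemma ge_det_scal: "c \<in> val_ring v \<Longrightarrow> ge v m (det2 x) \<Longrightarrow> ge v m (det2 (scal c x))"
  using ge_mult[OF dv ge_mult[OF dv, of 0 c 0 c], of m "det2 x"]
  by (simp add: det2_scal val_ring_ge[OF dv])

lemma UM_sum: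
  assumes "finite S" "\<forall>i\<in>S. f i \<in> \<Lambda> \<and> ge v m (det2 (f i))"
  shows "sum f S \<in> \<Lambda> \<and> ge v m (det2 (sum f S))"
  using assms
proof (induction S rule: finite_induct)
  case empty then show ?case by simp
next
  case (insert a S)
  then show ?case using L_add UM by simp
qed

lemma Rr_sub: "Rr \<subseteq> \<Lambda>" unfolding Rr_def by auto

lemma Rr_add: "x \<in> Rr \<Longrightarrow> y \<in> Rr \<Longrightarrow> x + y \<in> Rr"
  unfolding Rr_def using L_add UM by auto
lemma Rr_mult: "x \<in> Rr \<Longrightarrow> y \<in> Rr \<Longrightarrow> x ** y \<in> Rr"
  unfolding Rr_def using L_mult ge_mult[OF dv, of 0 _ 0] by (auto simp: det2_mult)
lemma Rr_neg: "x \<in> Rr \<Longrightarrow> - x \<in> Rr"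
  unfolding Rr_def using L_neg by (auto simp: det2_neg)
lemma Rr_1: "mat 1 \<in> Rr"
  unfolding Rr_def using ge_1[OF dv] by simp
lemma Rr_0: "0 \<in> Rr"
  unfolding Rr_def by simp

lemma R_eq: "ring_of_integers v \<Lambda> = Rr"
proof
  show "Rr \<subseteq> ring_of_integers v \<Lambda>"
  proof
    fix x assume x: "x \<in> Rr"
    then have xL: "x \<in> \<Lambda>" and gd: "ge v 0 (det2 x)" unfolding Rr_def by auto
    have gt: "ge v 0 (- tr2 x)" using H0[OF xL gd] ge_neg[OF dv] by blast
    define c where "c = (\<lambda>i::nat. if i = 0 then det2 x else - tr2 x)"
    have "\<forall>i<2. c i \<in> val_ring v" using gd gt by (simp add: c_def val_ring_ge[OF dv])
    moreover have "mpow x 2 + (\<Sum>i<2. scal (c i) (mpow x i)) = 0"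
      by (simp add: numeral_2_eq_2 c_def cayley[of x]) (subst mat2_eq_iff, simp add: algebra_simps)
    ultimately show "x \<in> ring_of_integers v \<Lambda>" unfolding ring_of_integers_def using xL by blast
  qed
next
  show "ring_of_integers v \<Lambda> \<subseteq> Rr"
  proof
    fix x assume "x \<in> ring_of_integers v \<Lambda>"
    then obtain n c where xL: "x \<in> \<Lambda>" and c: "\<forall>i<n. c i \<in> val_ring v"
      and eq: "mpow x n + (\<Sum>i<n. scal (c i) (mpow x i)) = 0"
      unfolding ring_of_integers_def by blast
    show "x \<in> Rr"
    proof (rule ccontr)
      assume "x \<notin> Rr"
      then have nge: "\<not> ge v 0 (det2 x)" using xL unfolding Rr_def by blast
      then have dnz: "det2 x \<noteq> 0" and W: "v (det2 x) < 0" unfolding ge_def by auto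
      define W where "W = v (det2 x)"
      have n0: "n \<noteq> 0"
      proof
        assume "n = 0"
        then have "mat 1 = (0::'a mat2)" using eq by simp
        with mat_1_ne_0 show False by blast
      qed
      have "\<forall>i\<in>{..<n}. scal (c i) (mpow x i) \<in> \<Lambda> \<and> ge v (int (n - 1) * W) (det2 (scal (c i) (mpow x i)))"
      proof
        fix i assume i: "i \<in> {..<n}"
        have "ge v (int i * W) (det2 (mpow x i))"
          unfolding mpow_det using ge_pow[OF dv, of W "det2 x" i] W_def unfolding ge_def by auto
        then have "ge v (int (n-1) * W) (det2 (mpow x i))"
          using ge_mono[OF dv] i W W_def by (simp add: mult_right_mono_neg)
        then show "scal (c i) (mpow x i) \<in> \<Lambda> \<and> ge v (int (n - 1) * W) (det2 (scal (c i) (mpow x i)))"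
          using ge_det_scal c i L_scal L_mpow xL by auto
      qed
      from UM_sum[OF _ this] have "ge v (int (n - 1) * W) (det2 (\<Sum>i<n. scal (c i) (mpow x i)))" by simp
      moreover have "mpow x n = - (\<Sum>i<n. scal (c i) (mpow x i))" using eq by (simp add: add_eq_0_iff)
      ultimately have "ge v (int (n - 1) * W) (det2 (mpow x n))" by (simp add: det2_neg)
      moreover have "det2 (mpow x n) \<noteq> 0" "v (det2 (mpow x n)) = int n * W"
        using dnz vpow[OF dv dnz] W_def by (simp_all add: mpow_det)
      ultimately have "int (n - 1) * W \<le> int n * W" unfolding ge_def by simp
      then show False using W W_def n0 by (simp add: of_nat_diff algebra_simps)
    qed
  qed
qed

end


context QF begin

definition Pp where "Pp = {x \<in> \<Lambda>. ge v 1 (det2 x)}"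

lemma inv_det:
  assumes "x \<in> \<Lambda>" "x \<noteq> 0"
  obtains xi where "xi \<in> \<Lambda>" "x ** xi = mat 1" "xi ** x = mat 1" "det2 x \<noteq> 0" "det2 xi \<noteq> 0"
    "v (det2 xi) = - v (det2 x)"
proof -
  obtain xi where xi: "xi \<in> \<Lambda>" "x ** xi = mat 1" "xi ** x = mat 1" using L_inv assms by blast
  have dz: "det2 x * det2 xi = 1" using det2_mult[of x xi] xi by simp
  then have dznz: "det2 x \<noteq> 0" "det2 xi \<noteq> 0" by auto
  have "v (det2 x) + v (det2 xi) = 0" using vmult[OF dv dznz] dz v1[OF dv] by simp
  then show ?thesis using that xi dznz by simp
qed

lemma unif:
  assumes u: "uniformizer Rr \<pi>"
  shows "\<pi> \<in> \<Lambda>" "\<pi> \<noteq> 0" "0 < v (det2 \<pi>)"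
    "\<And>x. x \<in> \<Lambda> \<Longrightarrow> x \<noteq> 0 \<Longrightarrow> 0 < v (det2 x) \<Longrightarrow> v (det2 \<pi>) \<le> v (det2 x)"
proof -
  define I where "I = {\<pi> ** x | x. x \<in> Rr}"
  have piR: "\<pi> \<in> Rr" and mI: "is_maximal_ideal Rr I" using u unfolding uniformizer_def I_def by auto
  have piL: "\<pi> \<in> \<Lambda>" using piR Rr_sub by auto
  have PI: "is_ideal Rr Pp"
    unfolding is_ideal_def Pp_def Rr_def
  proof (intro conjI ballI)
    show "{x \<in> \<Lambda>. ge v 1 (det2 x)} \<subseteq> {x \<in> \<Lambda>. ge v 0 (det2 x)}" using ge_mono[OF dv] by fastforce
    show "0 \<in> {x \<in> \<Lambda>. ge v 1 (det2 x)}" by simp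
    fix x y assume "x \<in> {x \<in> \<Lambda>. ge v 1 (det2 x)}" "y \<in> {x \<in> \<Lambda>. ge v 1 (det2 x)}"
    then show "x + y \<in> {x \<in> \<Lambda>. ge v 1 (det2 x)}" "- x \<in> {x \<in> \<Lambda>. ge v 1 (det2 x)}"
      using UM L_add L_neg by (auto simp: det2_neg)
  next
    fix r x assume r: "r \<in> {x \<in> \<Lambda>. ge v 0 (det2 x)}" and x: "x \<in> {x \<in> \<Lambda>. ge v 1 (det2 x)}"
    then have "ge v (0 + 1) (det2 r * det2 x)" using ge_mult[OF dv] by blast
    then show "r ** x \<in> {x \<in> \<Lambda>. ge v 1 (det2 x)}" "x ** r \<in> {x \<in> \<Lambda>. ge v 1 (det2 x)}"
      using r x L_mult by (auto simp: det2_mult mult.commute)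
  qed
  have one_notP: "mat 1 \<notin> Pp" unfolding Pp_def ge_def by (simp add: v1[OF dv])
  have piP: "\<pi> \<in> Pp"
  proof (rule ccontr)
    assume "\<pi> \<notin> Pp"
    then have pnz: "\<pi> \<noteq> 0" unfolding Pp_def using piL by auto
    obtain pi where pi: "pi \<in> \<Lambda>" "\<pi> ** pi = mat 1" "det2 \<pi> \<noteq> 0" "det2 pi \<noteq> 0"
      "v (det2 pi) = - v (det2 \<pi>)" using inv_det[OF piL pnz] by metis
    have "v (det2 \<pi>) = 0" using \<open>\<pi> \<notin> Pp\<close> piR pi(3) unfolding Pp_def Rr_def ge_def using piL by auto
    then have piR': "pi \<in> Rr" unfolding Rr_def ge_def using pi by simp
    have "Rr \<subseteq> I"
    proof
      fix r assume "r \<in> Rr"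
      then have "pi ** r \<in> Rr" using Rr_mult piR' by blast
      moreover have "r = \<pi> ** (pi ** r)" by (simp add: matrix_mul_assoc pi)
      ultimately show "r \<in> I" unfolding I_def by blast
    qed
    moreover have "I \<subseteq> Rr" using mI unfolding is_maximal_ideal_def is_ideal_def by blast
    ultimately show False using mI unfolding is_maximal_ideal_def by blast
  qed
  have IP: "I \<subseteq> Pp"
  proof
    fix y assume "y \<in> I"
    then obtain x where "y = \<pi> ** x" "x \<in> Rr" unfolding I_def by blast
    then show "y \<in> Pp" using piP ge_mult[OF dv, of 1 "det2 \<pi>" 0 "det2 x"] L_mult piL
      unfolding Pp_def Rr_def by (auto simp: det2_mult)
  qed
  have PR: "Pp \<noteq> Rr" using one_notP Rr_1 by blast
  have PeqI: "Pp = I" using mI PI IP PR unfolding is_maximal_ideal_def by blast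
  obtain t where t: "t \<noteq> 0" "v t = 1" using vsurj[OF dv] by blast
  have "mat t \<in> Pp" unfolding Pp_def ge_def using vmult[OF dv t(1) t(1)] t by simp
  moreover have "mat t \<noteq> (0::'a mat2)" using t(1) by (simp add: mat2_eq_iff)
  ultimately show pnz: "\<pi> \<noteq> 0" using PeqI unfolding I_def by auto
  show "\<pi> \<in> \<Lambda>" by (rule piL)
  show "0 < v (det2 \<pi>)" using piP pnz L_det_nz[OF piL] unfolding Pp_def ge_def by auto
  fix x assume x: "x \<in> \<Lambda>" "x \<noteq> 0" "0 < v (det2 x)"
  then have "x \<in> I" using PeqI unfolding Pp_def ge_def by auto
  then obtain r where r: "x = \<pi> ** r" "r \<in> Rr" unfolding I_def by blast
  have rnz: "r \<noteq> 0" using r x by auto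
  have "det2 r \<noteq> 0" "det2 \<pi> \<noteq> 0" using rnz pnz L_det_nz r Rr_sub piL by auto
  then have "v (det2 x) = v (det2 \<pi>) + v (det2 r)" using r by (simp add: det2_mult vmult[OF dv])
  moreover have "v (det2 r) \<ge> 0" using r(2) \<open>det2 r \<noteq> 0\<close> unfolding Rr_def ge_def by auto
  ultimately show "v (det2 \<pi>) \<le> v (det2 x)" by simp
qed

lemma vdivis:
  assumes u: "uniformizer Rr \<pi>" and e: "e \<in> \<Lambda>" "e \<noteq> 0" "0 \<le> v (det2 e)"
  shows "\<exists>r::nat. v (det2 e) = int r * v (det2 \<pi>)"
proof -
  note U = unif[OF u]
  define d where "d = v (det2 \<pi>)"
  define s where "s = v (det2 e)"
  have d0: "0 < d" using U d_def by simp
  define r where "r = nat (s div d)"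
  define s0 where "s0 = s mod d"
  have sdiv: "s = int r * d + s0" unfolding r_def s0_def using e(3) d0 s_def
    by (simp add: pos_imp_zdiv_nonneg_iff)
  have s0: "0 \<le> s0" "s0 < d" using d0 s0_def by auto
  obtain pi where pi: "pi \<in> \<Lambda>" "det2 pi \<noteq> 0" "v (det2 pi) = - d"
    using inv_det[OF U(1) U(2)] d_def by metis
  define e' where "e' = e ** mpow pi r"
  have e'L: "e' \<in> \<Lambda>" using L_mult L_mpow e pi e'_def by simp
  have dnz: "det2 e \<noteq> 0" using L_det_nz e by auto
  have "det2 e' = det2 e * det2 pi ^ r" by (simp add: e'_def det2_mult mpow_det)
  moreover have "det2 pi ^ r \<noteq> 0" using pi by simp
  moreover have "v (det2 e * det2 pi ^ r) = v (det2 e) + v (det2 pi ^ r)"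
    by (rule vmult[OF dv dnz]) (simp add: pi)
  ultimately have de': "det2 e' \<noteq> 0" "v (det2 e') = s0"
    using vpow[OF dv pi(2)] pi sdiv s_def dnz by (simp_all add: algebra_simps)
  have "s0 = 0"
  proof (rule ccontr)
    assume "s0 \<noteq> 0"
    then have "0 < v (det2 e')" using de' s0 by simp
    moreover have "e' \<noteq> 0" using de' by auto
    ultimately have "d \<le> s0" using U(4)[OF e'L] de' d_def by simp
    then show False using s0 by simp
  qed
  then show ?thesis using sdiv s_def d_def by auto
qed

end


lemma mv_entry [simp]: "((A::'a::semiring_1 mat2) *v x)$i = A$i$1 * x$1 + A$i$2 * x$2"
  by (simp add: matrix_vector_mult_def sum_2)

lemma mult_add_rd: "((A::'a::comm_ring_1 mat2) + B) ** (C::'a mat2) = A ** C + B ** C"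
  by (subst mat2_eq_iff) (simp add: algebra_simps)

lemma cramer:
  fixes w1 w2 e1 e2 f1 f2 :: "'a::field"
  assumes D: "e1 * f2 - e2 * f1 \<noteq> 0"
  shows "((w1*f2 - w2*f1)/(e1 * f2 - e2 * f1))*e1 + ((e1*w2 - e2*w1)/(e1 * f2 - e2 * f1))*f1 = w1"
    "((w1*f2 - w2*f1)/(e1 * f2 - e2 * f1))*e2 + ((e1*w2 - e2*w1)/(e1 * f2 - e2 * f1))*f2 = w2"
proof -
  have "(w1*f2 - w2*f1)*e1 + (e1*w2 - e2*w1)*f1 = w1 * (e1 * f2 - e2 * f1)" by (simp add: algebra_simps)
  then show "((w1*f2 - w2*f1)/(e1 * f2 - e2 * f1))*e1 + ((e1*w2 - e2*w1)/(e1 * f2 - e2 * f1))*f1 = w1"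
    using D by (simp add: divide_simps)
  have "(w1*f2 - w2*f1)*e2 + (e1*w2 - e2*w1)*f2 = w2 * (e1 * f2 - e2 * f1)" by (simp add: algebra_simps)
  then show "((w1*f2 - w2*f1)/(e1 * f2 - e2 * f1))*e2 + ((e1*w2 - e2*w1)/(e1 * f2 - e2 * f1))*f2 = w2"
    using D by (simp add: divide_simps)
qed

lemma vec2_eq_iff: "(x::'a^2) = y \<longleftrightarrow> x$1 = y$1 \<and> x$2 = y$2"
  by (auto simp: vec_eq_iff forall_2)

lemma field2:
  fixes u u' e1 e2 f1 f2 :: "'a::field"
  assumes "u * e1 + u' * e2 = 0" "u * f1 + u' * f2 = 0" "e1 * f2 - e2 * f1 \<noteq> 0"
  shows "u = 0 \<and> u' = 0"
proof -
  have "u * (e1 * f2 - e2 * f1) = f2 * (u * e1 + u' * e2) - e2 * (u * f1 + u' * f2)"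
    by (simp add: algebra_simps)
  then have a: "u = 0" using assms by simp
  have "u' * (e1 * f2 - e2 * f1) = e1 * (u * f1 + u' * f2) - f1 * (u * e1 + u' * e2)"
    by (simp add: algebra_simps)
  then have "u' = 0" using assms by simp
  with a show ?thesis by simp
qed

context QF begin

lemma cyc: "\<exists>e::'a^2. e$1 * (\<alpha> *v e)$2 - e$2 * (\<alpha> *v e)$1 \<noteq> 0"
proof (rule ccontr)
  assume "\<not> ?thesis"
  then have h: "\<And>e::'a^2. e$1 * (\<alpha> *v e)$2 - e$2 * (\<alpha> *v e)$1 = 0" by blast
  have c: "\<alpha>$2$1 = 0" using h[of "\<chi> i. if i = 1 then 1 else 0"] by simp
  have b: "\<alpha>$1$2 = 0" using h[of "\<chi> i. if i = 2 then 1 else 0"] by simp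
  have "\<alpha>$2$2 - \<alpha>$1$1 = 0" using h[of "\<chi> i. 1"] b c by (simp add: algebra_simps)
  then have "\<alpha> = mat (\<alpha>$1$1)" using b c by (simp add: mat2_eq_iff)
  then show False using ans by blast
qed

definition ev where "ev = (SOME e::'a^2. e$1 * (\<alpha> *v e)$2 - e$2 * (\<alpha> *v e)$1 \<noteq> 0)"
definition fv where "fv = \<alpha> *v ev"
definition Dv where "Dv = ev$1 * fv$2 - ev$2 * fv$1"

lemma Dv_nz: "Dv \<noteq> 0"
  unfolding Dv_def fv_def ev_def using someI_ex[OF cyc] by simp

lemma ev_nz: "ev \<noteq> 0"
  using Dv_nz unfolding Dv_def by auto

definition lof where "lof w = mat ((w$1 * fv$2 - w$2 * fv$1)/Dv) + scal ((ev$1 * w$2 - ev$2 * w$1)/Dv) \<alpha>"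

lemma lof_in [simp]: "lof w \<in> \<Lambda>" unfolding lof_def by simp

lemma lam_v: "(mat a + scal b \<alpha>) *v x = (\<chi> i. a * x$i + b * (\<alpha> *v x)$i)"
  by (subst vec2_eq_iff) (simp add: algebra_simps)

lemma lof_e: "lof w *v ev = w"
proof -
  have "lof w *v ev = (\<chi> i. ((w$1 * fv$2 - w$2 * fv$1)/Dv) * ev$i + ((ev$1 * w$2 - ev$2 * w$1)/Dv) * fv$i)"
    unfolding lof_def lam_v fv_def by simp
  also have "\<dots> = w" using Dv_nz cramer[of "ev$1" "fv$2" "ev$2" "fv$1" "w$1" "w$2"] unfolding Dv_def
    by (subst vec2_eq_iff) simp
  finally show ?thesis .
qed

lemma lof_add: "lof (w + w') = lof w + lof w'"
  unfolding lof_def by (subst mat2_eq_iff) (simp add: field_simps algebra_simps add_divide_distrib diff_divide_distrib)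

lemma lof_uniq: assumes l: "l \<in> \<Lambda>" shows "lof (l *v ev) = l"
proof (rule ccontr)
  define m where "m = lof (l *v ev)"
  assume "lof (l *v ev) \<noteq> l"
  then have "m - l \<noteq> 0" "m - l \<in> \<Lambda>" using m_def L_diff l by auto
  then obtain n where n: "n ** (m - l) = mat 1" using L_inv by blast
  have "(m - l) *v ev = 0" using lof_e[of "l *v ev"] unfolding m_def by (simp add: matrix_vector_mult_diff_rdistrib)
  then have "ev = (n ** (m - l)) *v ev" using n by simp
  also have "\<dots> = n *v ((m - l) *v ev)" by (simp add: matrix_vector_mul_assoc)
  finally show False using \<open>(m - l) *v ev = 0\<close> ev_nz by simp
qed

lemma basis_eq: assumes "A *v ev = C *v ev" "A *v fv = C *v fv" shows "A = (C::'a mat2)"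
proof -
  have D: "ev$1 * fv$2 - ev$2 * fv$1 \<noteq> 0" using Dv_nz Dv_def by simp
  have "\<forall>i. (A$i$1 - C$i$1) * ev$1 + (A$i$2 - C$i$2) * ev$2 = 0 \<and>
            (A$i$1 - C$i$1) * fv$1 + (A$i$2 - C$i$2) * fv$2 = 0"
    using assms by (simp add: vec_eq_iff algebra_simps)
  then have "\<forall>i. A$i$1 - C$i$1 = 0 \<and> A$i$2 - C$i$2 = 0" using field2[OF _ _ D] by blast
  then show ?thesis by (simp add: mat2_eq_iff)
qed

definition l1 where "l1 m = lof (m *v ev)"
definition l2 where "l2 m = lof (m *v fv)"
definition pp where "pp m = l2 m - l1 m ** \<alpha>"

lemma l1_in [simp]: "l1 m \<in> \<Lambda>" unfolding l1_def by simp
lemma l2_in [simp]: "l2 m \<in> \<Lambda>" unfolding l2_def by simp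
lemma pp_in [simp]: "pp m \<in> \<Lambda>" unfolding pp_def using L_diff L_mult by simp

lemma l1_lin: "l \<in> \<Lambda> \<Longrightarrow> l1 (l ** m) = l ** l1 m"
proof -
  assume l: "l \<in> \<Lambda>"
  have "(l ** l1 m) *v ev = (l ** m) *v ev"
    by (simp add: matrix_vector_mul_assoc[symmetric] l1_def lof_e)
  then have "l1 (l ** m) = lof ((l ** l1 m) *v ev)" by (simp add: l1_def)
  then show ?thesis using lof_uniq L_mult l by simp
qed

lemma l2_lin: "l \<in> \<Lambda> \<Longrightarrow> l2 (l ** m) = l ** l2 m"
proof -
  assume l: "l \<in> \<Lambda>"
  have "(l ** l2 m) *v ev = (l ** m) *v fv"
    by (simp add: matrix_vector_mul_assoc[symmetric] l2_def lof_e)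
  then have "l2 (l ** m) = lof ((l ** l2 m) *v ev)" by (simp add: l2_def)
  then show ?thesis using lof_uniq L_mult l by simp
qed

lemma pp_lin: "l \<in> \<Lambda> \<Longrightarrow> pp (l ** m) = l ** pp m"
  unfolding pp_def by (simp add: l1_lin l2_lin mult_diff_r matrix_mul_assoc)

lemma l1_add: "l1 (m + m') = l1 m + l1 m'"
  unfolding l1_def by (simp add: matrix_vector_mult_add_rdistrib lof_add)
lemma l2_add: "l2 (m + m') = l2 m + l2 m'"
  unfolding l2_def by (simp add: matrix_vector_mult_add_rdistrib lof_add)
lemma pp_add: "pp (m + m') = pp m + pp m'"
  unfolding pp_def by (simp add: l1_add l2_add mult_add_rd algebra_simps)

lemma l1_id: "x \<in> \<Lambda> \<Longrightarrow> l1 x = x"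
  unfolding l1_def by (rule lof_uniq)
lemma l2_id: "x \<in> \<Lambda> \<Longrightarrow> l2 x = x ** \<alpha>"
  unfolding l2_def fv_def using lof_uniq[of "x ** \<alpha>"] L_mult
  by (simp add: matrix_vector_mul_assoc)
lemma pp_id: "x \<in> \<Lambda> \<Longrightarrow> pp x = 0"
  unfolding pp_def by (simp add: l1_id l2_id)

lemma pp_ker: "pp m = 0 \<Longrightarrow> m \<in> \<Lambda>"
proof -
  assume "pp m = 0"
  then have e2: "l2 m = l1 m ** \<alpha>" unfolding pp_def by simp
  have a: "l1 m *v ev = m *v ev" unfolding l1_def by (simp add: lof_e)
  have "l1 m *v fv = (l1 m ** \<alpha>) *v ev" unfolding fv_def by (simp add: matrix_vector_mul_assoc)
  also have "\<dots> = m *v fv" unfolding e2[symmetric] l2_def by (simp add: lof_e)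
  finally have "m = l1 m" using basis_eq a by metis
  then show ?thesis using l1_in by metis
qed

lemma l1_scal: "l1 (scal c m) = scal c (l1 m)"
  by (simp add: scal_mat l1_lin)
lemma pp_scal: "pp (scal c m) = scal c (pp m)"
  by (simp add: scal_mat pp_lin)

end


context QF begin

lemma L_sum: "finite S \<Longrightarrow> \<forall>i\<in>S. f i \<in> \<Lambda> \<Longrightarrow> sum f S \<in> \<Lambda>"
  by (induction S rule: finite_induct) (auto simp: L_add)

lemma lin_span_L: "S \<subseteq> \<Lambda> \<Longrightarrow> lin_span C S \<subseteq> \<Lambda>"
proof
  fix x assume S: "S \<subseteq> \<Lambda>" and "x \<in> lin_span C S"
  then obtain G c where x: "x = (\<Sum>g\<in>G. scal (c g) g)" "finite G" "G \<subseteq> S"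
    unfolding lin_span_def by blast
  have "\<forall>g\<in>G. scal (c g) g \<in> \<Lambda>" using x S L_scal by blast
  then show "x \<in> \<Lambda>" using L_sum[OF x(2)] x(1) by simp
qed

lemma bound:
  assumes G: "finite G"
    and hadd: "\<And>m m'. h (m + m') = h m + h m'"
    and hscal: "\<And>c m. h (scal c m) = scal c (h m)"
    and hin: "\<And>m. h m \<in> \<Lambda>"
  shows "\<exists>M. \<forall>b \<in> lin_span (val_ring v) G. ge v M (det2 (h b))"
proof -
  define M where "M = Min (insert 0 ((\<lambda>g. v (det2 (h g))) ` G))"
  have gM: "ge v M (det2 (h g))" if "g \<in> G" for g
  proof -
    have "M \<le> v (det2 (h g))" unfolding M_def using G that by simp
    then show ?thesis unfolding ge_def by simp
  qed
  have h0: "h 0 = 0" using hscal[of 0 0] by simp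
  have hsum: "finite S \<Longrightarrow> h (sum f S) = sum (h \<circ> f) S" for S and f :: "'b \<Rightarrow> 'a mat2"
    by (induction S rule: finite_induct) (auto simp: h0 hadd)
  show ?thesis
  proof (rule exI, rule ballI)
    fix b assume "b \<in> lin_span (val_ring v) G"
    then obtain G' c where b: "b = (\<Sum>g\<in>G'. scal (c g) g)" "finite G'" "G' \<subseteq> G"
      "\<forall>g\<in>G'. c g \<in> val_ring v" unfolding lin_span_def by blast
    have "h b = (\<Sum>g\<in>G'. scal (c g) (h g))" using b hsum[of G' "\<lambda>g. scal (c g) g"] hscal by (simp add: o_def)
    moreover have "\<forall>g\<in>G'. scal (c g) (h g) \<in> \<Lambda> \<and> ge v M (det2 (scal (c g) (h g)))"
    proof
      fix g assume g: "g \<in> G'"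
      then have "g \<in> G" "c g \<in> val_ring v" using b by auto
      then show "scal (c g) (h g) \<in> \<Lambda> \<and> ge v M (det2 (scal (c g) (h g)))"
        using gM[of g] ge_det_scal[of "c g" M "h g"] hin[of g] L_scal[of "h g" "c g"] by simp
    qed
    ultimately show "ge v M (det2 (h b))" using UM_sum[OF b(2)] by simp
  qed
qed

lemma frac:
  assumes JL: "J \<subseteq> \<Lambda>" and JR: "\<forall>r\<in>Rr. \<forall>z\<in>J. r ** z \<in> J"
    and Jb: "\<forall>z\<in>J. ge v M (det2 z)" and Jnz: "\<exists>z\<in>J. z \<noteq> 0"
  shows "\<exists>m z0. z0 \<in> J \<and> z0 \<noteq> 0 \<and> v (det2 z0) = m \<and> J = {z \<in> \<Lambda>. ge v m (det2 z)}"
proof -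
  define P where "P = (\<lambda>k::nat. \<exists>z\<in>J. z \<noteq> 0 \<and> v (det2 z) = M + int k)"
  have vge: "z \<in> J \<Longrightarrow> z \<noteq> 0 \<Longrightarrow> M \<le> v (det2 z) \<and> det2 z \<noteq> 0" for z
    using Jb JL L_det_nz unfolding ge_def by auto
  obtain z1 where z1: "z1 \<in> J" "z1 \<noteq> 0" using Jnz by blast
  have "P (nat (v (det2 z1) - M))" unfolding P_def using z1 vge[OF z1] by (intro bexI[OF _ z1(1)]) simp
  then have PL: "P (LEAST k. P k)" by (rule LeastI)
  define m where "m = M + int (LEAST k. P k)"
  obtain z0 where z0: "z0 \<in> J" "z0 \<noteq> 0" "v (det2 z0) = m" using PL unfolding P_def m_def by blast
  have mmin: "z \<in> J \<Longrightarrow> z \<noteq> 0 \<Longrightarrow> m \<le> v (det2 z)" for z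
  proof -
    assume z: "z \<in> J" "z \<noteq> 0"
    then have "P (nat (v (det2 z) - M))" unfolding P_def using vge[OF z] by (intro bexI[OF _ z(1)]) simp
    then have "(LEAST k. P k) \<le> nat (v (det2 z) - M)" by (rule Least_le)
    then show ?thesis unfolding m_def using vge[OF z] by linarith
  qed
  have "J = {z \<in> \<Lambda>. ge v m (det2 z)}"
  proof
    show "J \<subseteq> {z \<in> \<Lambda>. ge v m (det2 z)}"
    proof
      fix z assume z: "z \<in> J"
      show "z \<in> {z \<in> \<Lambda>. ge v m (det2 z)}"
      proof (cases "z = 0")
        case True then show ?thesis using z JL by auto
      next
        case False then show ?thesis using z JL mmin[OF z] unfolding ge_def by auto
      qed
    qed
  next
    show "{z \<in> \<Lambda>. ge v m (det2 z)} \<subseteq> J"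
    proof
      fix z assume z: "z \<in> {z \<in> \<Lambda>. ge v m (det2 z)}"
      have z0L: "z0 \<in> \<Lambda>" using z0 JL by auto
      obtain zi where zi: "zi \<in> \<Lambda>" "zi ** z0 = mat 1" "det2 zi \<noteq> 0" "v (det2 zi) = - v (det2 z0)"
        using inv_det[OF z0L z0(2)] by metis
      define r where "r = z ** zi"
      have rz: "r ** z0 = z" unfolding r_def by (simp add: matrix_mul_assoc[symmetric] zi)
      have "ge v (m + - m) (det2 z * det2 zi)" using z zi z0 ge_mult[OF dv, of m "det2 z" "-m" "det2 zi"]
        unfolding ge_def by auto
      then have "r \<in> Rr" unfolding Rr_def r_def using L_mult z zi by (simp add: det2_mult)
      then have "r ** z0 \<in> J" using JR z0(1) by blast
      then show "z \<in> J" by (simp add: rz)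
    qed
  qed
  then show ?thesis using z0 by blast
qed

end


context QF begin
lemma pp_diff: "pp ((a::'a mat2) - b) = pp a - pp b"
proof -
  have "pp (a - b) = pp (a + scal (-1) b)" by (simp add: scal_neg)
  also have "\<dots> = pp a + scal (-1) (pp b)" by (simp only: pp_add pp_scal)
  also have "\<dots> = pp a - pp b" by (simp add: scal_neg)
  finally show ?thesis .
qed
end

theorem lemma5p1:
  fixes v :: "'a::field \<Rightarrow> int"
    and \<Lambda> B :: "'a mat2 set"
    and \<pi> :: "'a mat2"
  assumes "nonarch_local_field v"
    and "quadratic_subfield \<Lambda>"
    and "uniformizer (ring_of_integers v \<Lambda>) \<pi>"
    and "full_order v B"
    and "ring_of_integers v \<Lambda> \<subseteq> B"
  shows "\<forall>B'. full_order v B' \<and> B' \<subseteq> B \<and> ring_of_integers v \<Lambda> \<subseteq> B' \<longrightarrow>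
           (\<exists>r::nat. B' = {x + mpow \<pi> r ** y | x y. x \<in> ring_of_integers v \<Lambda> \<and> y \<in> B})"
proof (intro allI impI)
  fix B' assume hB': "full_order v B' \<and> B' \<subseteq> B \<and> ring_of_integers v \<Lambda> \<subseteq> B'"
  obtain \<alpha> where a1: "\<alpha> \<notin> range (\<lambda>c. mat c)" and a2: "\<Lambda> = {mat a + scal b \<alpha> | a b. True}"
    and a3: "\<forall>x\<in>\<Lambda>. \<forall>y\<in>\<Lambda>. x ** y \<in> \<Lambda>" and a4: "\<forall>x\<in>\<Lambda>. x \<noteq> 0 \<longrightarrow> (\<exists>y\<in>\<Lambda>. x ** y = mat 1)"
    using assms(2) unfolding quadratic_subfield_def by blast
  interpret Q: QF v \<Lambda> \<alpha> using assms(1) a1 a2 a3 a4 by unfold_locales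
  have dv: "discrete_valuation v" by (rule Q.dv)
  have Req: "ring_of_integers v \<Lambda> = Q.Rr" by (rule Q.R_eq)
  have u: "uniformizer Q.Rr \<pi>" using assms(3) Req by simp
  note U = Q.unif[OF u]
  define d where "d = v (det2 \<pi>)"
  have piR: "\<pi> \<in> Q.Rr" using u unfolding uniformizer_def by simp
  have B1: "mat 1 \<in> B" "\<forall>x\<in>B. \<forall>y\<in>B. x + y \<in> B \<and> x ** y \<in> B"
    "\<forall>c\<in>val_ring v. \<forall>x\<in>B. scal c x \<in> B"
    using assms(4) unfolding full_order_def is_order_def by auto
  obtain G where G: "finite G" "B = lin_span (val_ring v) G"
    using assms(4) unfolding full_order_def is_order_def by blast
  have B'1: "\<forall>x\<in>B'. \<forall>y\<in>B'. x + y \<in> B' \<and> x ** y \<in> B'" "lin_span UNIV B' = UNIV"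
    using hB' unfolding full_order_def is_order_def by auto
  have B'B: "B' \<subseteq> B" and RB': "Q.Rr \<subseteq> B'" using hB' Req by auto
  have RB: "Q.Rr \<subseteq> B" using RB' B'B by auto
  have m1: "-1 \<in> val_ring v" unfolding val_ring_def using vm1[OF dv] by simp
  have negB: "x \<in> B \<Longrightarrow> - x \<in> B" for x using B1(3) m1 by (metis scal_neg)
  have diffB: "x \<in> B \<Longrightarrow> y \<in> B \<Longrightarrow> x - y \<in> B" for x y using negB B1(2)
    by (metis diff_conv_add_uminus)
  have "\<exists>M. \<forall>b\<in>lin_span (val_ring v) G. ge v M (det2 (Q.l1 b))"
    by (rule Q.bound[OF G(1)]) (simp_all add: Q.l1_add Q.l1_scal)
  then obtain M0 where M0: "\<forall>b\<in>B. ge v M0 (det2 (Q.l1 b))" using G(2) by auto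
  have BL: "x \<in> B \<Longrightarrow> x \<in> \<Lambda> \<Longrightarrow> x \<in> Q.Rr" for x
  proof (rule ccontr)
    assume x: "x \<in> B" "x \<in> \<Lambda>" "x \<notin> Q.Rr"
    have mB: "mpow x n \<in> B" for n
      by (induction n) (use B1 x in auto)
    have gn: "ge v M0 (det2 x ^ n)" for n
    proof -
      have "Q.l1 (mpow x n) = mpow x n" using Q.l1_id Q.L_mpow x(2) by blast
      then have "ge v M0 (det2 (mpow x n))" using M0 mB[of n] by metis
      then show ?thesis by (simp add: mpow_det)
    qed
    have dnz: "det2 x \<noteq> 0" and W: "v (det2 x) < 0" using x unfolding Q.Rr_def ge_def by auto
    define n where "n = nat (- M0) + 1"
    have "v (det2 x ^ n) = int n * v (det2 x)" by (rule vpow[OF dv dnz])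
    moreover have "int n * v (det2 x) \<le> int n * (-1)" by (rule mult_left_mono) (use W in auto)
    moreover have "det2 x ^ n \<noteq> 0" using dnz by simp
    moreover have "- M0 + 1 \<le> int n" unfolding n_def by simp
    ultimately show False using gn[of n] unfolding ge_def by linarith
  qed
  have "\<exists>M. \<forall>b\<in>lin_span (val_ring v) G. ge v M (det2 (Q.pp b))"
    by (rule Q.bound[OF G(1)]) (simp_all add: Q.pp_add Q.pp_scal)
  then obtain M1 where M1: "\<forall>b\<in>B. ge v M1 (det2 (Q.pp b))" using G(2) by auto
  define J where "J = Q.pp ` B"
  define J' where "J' = Q.pp ` B'"
  have JL: "J \<subseteq> \<Lambda>" "J' \<subseteq> \<Lambda>" unfolding J_def J'_def by auto
  have JR: "\<forall>r\<in>Q.Rr. \<forall>z\<in>J. r ** z \<in> J"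
  proof (intro ballI)
    fix r z assume r: "r \<in> Q.Rr" and z: "z \<in> J"
    then obtain b where b: "b \<in> B" "z = Q.pp b" unfolding J_def by blast
    have "r ** b \<in> B" using B1 RB r b by auto
    moreover have "r ** z = Q.pp (r ** b)" using Q.pp_lin r Q.Rr_sub b by auto
    ultimately show "r ** z \<in> J" unfolding J_def by blast
  qed
  have J'R: "\<forall>r\<in>Q.Rr. \<forall>z\<in>J'. r ** z \<in> J'"
  proof (intro ballI)
    fix r z assume r: "r \<in> Q.Rr" and z: "z \<in> J'"
    then obtain b where b: "b \<in> B'" "z = Q.pp b" unfolding J'_def by blast
    have "r ** b \<in> B'" using B'1 RB' r b by auto
    moreover have "r ** z = Q.pp (r ** b)" using Q.pp_lin r Q.Rr_sub b by auto
    ultimately show "r ** z \<in> J'" unfolding J'_def by blast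
  qed
  have Jb: "\<forall>z\<in>J. ge v M1 (det2 z)" "\<forall>z\<in>J'. ge v M1 (det2 z)"
    using M1 B'B unfolding J_def J'_def by auto
  obtain b0 where b0: "b0 \<in> B'" "b0 \<notin> \<Lambda>"
  proof (rule ccontr)
    assume "\<not> thesis"
    then have BL': "B' \<subseteq> \<Lambda>" using that by blast
    have UL: "UNIV \<subseteq> \<Lambda>" using Q.lin_span_L[OF BL', of UNIV] B'1(2) by simp
    obtain A1 A2 :: "'a mat2" where "A1 ** A2 \<noteq> A2 ** A1" using noncomm by blast
    moreover have "A1 ** A2 = A2 ** A1" using Q.L_comm UL by blast
    ultimately show False by simp
  qed
  have nz: "Q.pp b0 \<noteq> 0" using b0 Q.pp_ker by blast
  have Jnz: "\<exists>z\<in>J. z \<noteq> 0" "\<exists>z\<in>J'. z \<noteq> 0"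
    using nz b0 B'B unfolding J_def J'_def by auto
  have "\<exists>m z0. z0 \<in> J \<and> z0 \<noteq> 0 \<and> v (det2 z0) = m \<and> J = {z \<in> \<Lambda>. ge v m (det2 z)}"
    by (rule Q.frac[OF JL(1) JR Jb(1) Jnz(1)])
  then obtain m z0 where z0: "z0 \<in> J" "z0 \<noteq> 0" "v (det2 z0) = m" and Jeq: "J = {z \<in> \<Lambda>. ge v m (det2 z)}"
    by iprover
  have "\<exists>m z0. z0 \<in> J' \<and> z0 \<noteq> 0 \<and> v (det2 z0) = m \<and> J' = {z \<in> \<Lambda>. ge v m (det2 z)}"
    by (rule Q.frac[OF JL(2) J'R Jb(2) Jnz(2)])
  then obtain m' z0' where z0': "z0' \<in> J'" "z0' \<noteq> 0" "v (det2 z0') = m'" and J'eq: "J' = {z \<in> \<Lambda>. ge v m' (det2 z)}"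
    by iprover
  have "z0' \<in> J" using z0'(1) B'B unfolding J_def J'_def by auto
  then have "ge v m (det2 z0')" using Jeq by auto
  moreover have "det2 z0' \<noteq> 0" using Q.L_det_nz z0'(2) JL(2) z0'(1) by auto
  ultimately have mm': "m \<le> m'" using z0'(3) unfolding ge_def by auto
  have z0L: "z0 \<in> \<Lambda>" "z0' \<in> \<Lambda>" using z0 z0' JL by auto
  obtain z0i where z0i: "z0i \<in> \<Lambda>" "det2 z0i \<noteq> 0" "v (det2 z0i) = - v (det2 z0)"
    using Q.inv_det[OF z0L(1) z0(2)] by metis
  define e where "e = z0' ** z0i"
  have eL: "e \<in> \<Lambda>" using Q.L_mult z0L z0i e_def by simp
  have dz0': "det2 z0' \<noteq> 0" using Q.L_det_nz z0L z0' by auto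
  have de: "det2 e \<noteq> 0" "v (det2 e) = m' - m"
    using z0i dz0' z0 z0' vmult[OF dv dz0' z0i(2)] by (simp_all add: e_def det2_mult)
  have enz: "e \<noteq> 0" using de by auto
  obtain r :: nat where r: "m' - m = int r * d"
    using Q.vdivis[OF u eL enz] de mm' d_def by auto
  define pr where "pr = mpow \<pi> r"
  have prR: "pr \<in> Q.Rr" unfolding pr_def
    by (induction r) (auto intro: Q.Rr_mult Q.Rr_1 piR)
  have prL: "pr \<in> \<Lambda>" using prR Q.Rr_sub by auto
  have dpi: "det2 \<pi> \<noteq> 0" using U Q.L_det_nz by auto
  have dpr: "det2 pr \<noteq> 0" "v (det2 pr) = int r * d"
    using dpi vpow[OF dv dpi, of r] by (simp_all add: pr_def mpow_det d_def)
  have prnz: "pr \<noteq> 0" using dpr by auto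
  obtain pri where pri: "pri \<in> \<Lambda>" "pr ** pri = mat 1" "det2 pri \<noteq> 0" "v (det2 pri) = - v (det2 pr)"
    using Q.inv_det[OF prL prnz] by metis
  have prB: "pr \<in> B" using prR RB by auto
  show "\<exists>r::nat. B' = {x + mpow \<pi> r ** y | x y. x \<in> ring_of_integers v \<Lambda> \<and> y \<in> B}"
  proof (rule exI[of _ r], rule set_eqI, rule iffI)
    fix b' assume b': "b' \<in> B'"
    have "Q.pp b' \<in> J'" unfolding J'_def using b' by simp
    then have gb: "ge v m' (det2 (Q.pp b'))" using J'eq by auto
    define z where "z = pri ** Q.pp b'"
    have zL: "z \<in> \<Lambda>" using pri Q.L_mult z_def by simp
    have "ge v (- (int r * d)) (det2 pri)" using pri dpr unfolding ge_def by simp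
    from ge_mult[OF dv this gb] have "ge v (- (int r * d) + m') (det2 z)" by (simp add: z_def det2_mult)
    moreover have "- (int r * d) + m' = m" using r by simp
    ultimately have "ge v m (det2 z)" by simp
    then have "z \<in> J" using Jeq zL by simp
    then obtain y where y: "y \<in> B" "z = Q.pp y" unfolding J_def by blast
    have "Q.pp (pr ** y) = pr ** z" using Q.pp_lin[OF prL] y by simp
    also have "\<dots> = Q.pp b'" unfolding z_def by (simp add: matrix_mul_assoc pri)
    finally have "Q.pp (b' - pr ** y) = 0" by (simp add: Q.pp_diff)
    then have "b' - pr ** y \<in> \<Lambda>" by (rule Q.pp_ker)
    moreover have "b' - pr ** y \<in> B" using diffB b' B'B B1 prB y by auto
    ultimately have "b' - pr ** y \<in> ring_of_integers v \<Lambda>" using BL Req by simp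
    moreover have "b' = (b' - pr ** y) + mpow \<pi> r ** y" by (simp add: pr_def)
    ultimately show "b' \<in> {x + mpow \<pi> r ** y | x y. x \<in> ring_of_integers v \<Lambda> \<and> y \<in> B}"
      using y(1) by blast
  next
    fix b assume "b \<in> {x + mpow \<pi> r ** y | x y. x \<in> ring_of_integers v \<Lambda> \<and> y \<in> B}"
    then obtain x y where b: "b = x + pr ** y" "x \<in> Q.Rr" "y \<in> B" unfolding pr_def Req by blast
    have "Q.pp y \<in> J" unfolding J_def using b by simp
    then have gy: "ge v m (det2 (Q.pp y))" using Jeq by auto
    have "ge v (int r * d) (det2 pr)" using dpr unfolding ge_def by simp
    from ge_mult[OF dv this gy] have "ge v m' (det2 (pr ** Q.pp y))" using r by (simp add: det2_mult algebra_simps)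
    moreover have "pr ** Q.pp y \<in> \<Lambda>" using Q.L_mult prL by simp
    ultimately have "pr ** Q.pp y \<in> J'" using J'eq by simp
    then obtain b' where b': "b' \<in> B'" "Q.pp b' = pr ** Q.pp y" unfolding J'_def by auto
    define q where "q = pr ** y - b'"
    have "Q.pp q = 0" unfolding q_def using b' Q.pp_lin[OF prL] by (simp add: Q.pp_diff)
    then have "q \<in> \<Lambda>" by (rule Q.pp_ker)
    moreover have "q \<in> B" unfolding q_def using diffB B1 prB b b' B'B by auto
    ultimately have "q \<in> B'" using BL RB' by auto
    then have "x + (q + b') \<in> B'" using B'1 RB' b b' by auto
    moreover have "b = x + (q + b')" using b q_def by simp
    ultimately show "b \<in> B'" by simp
  qed
qed


end
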